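(* Let $\mathcal S$ be a system and $\mathcal T$ a target behavior. If $\tilde{\mathcal T}_1$ and $\tilde{\mathcal T}_2$ are both optimal approximations of $\mathcal T$ on $\mathcal S$, then $\tilde{\mathcal T}_1\sim\tilde{\mathcal T}_2$; i.e., the optimal approximation is unique up to simulation equivalence.
   Context: A behavior is a tuple $\mathcal B=\langle B,\mathcal A,b_0,\varrho\rangle$ with $B$ a finite set of states, $\mathcal A$ a set of actions, $b_0\in B$ the initial state, and $\varrho\subseteq B\times\mathcal A\times B$ a transition relation (written $b\xrightarrow{a}b'$); every state is assumed to have at least one outgoing transition. A system is a tuple $\mathcal S=\langle\mathcal B_1,\dots,\mathcal B_n\rangle$ of behaviors $\mathcal B_i=\langle B_i,\mathcal A_i,b_{i0},\varrho_i\rangle$. Its enacted system has states $B_1\times\dots\times B_n$ (for a state $s$, $\mathrm{beh}_i(s)$ denotes its $i$-th component), initial state $s_0=\langle b_{10},\dots,b_{n0}\rangle$, and transitions $s\xrightarrow{a,k}s'$ iff $\mathrm{beh}_k(s)\xrightarrow{a}\mathrm{beh}_k(s')$ in $\mathcal B_k$ and $\mathrm{beh}_i(s')=\mathrm{beh}_i(s)$ for all $i\neq k$. A system history is a finite sequence $h=s^0\xrightarrow{a^1,k^1}s^1\cdots\xrightarrow{a^\ell,k^\ell}s^\ell$ of enacted-system transitions with $s^0=s_0$; $\mathcal H_{\mathcal S}$ is the set of system histories, $|h|=\ell$, $\mathrm{last}(h)=s^\ell$, and $h|_i$ is the prefix of length $i$. A target behavior $\mathcal T=\langle T,\mathcal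 A,t_0,\varrho_T\rangle$ is a (possibly nondeterministic) behavior; a trace of $\mathcal T$ is a finite or infinite sequence $t^0\xrightarrow{a^1}t^1\xrightarrow{a^2}\cdots$ with $t^0=t_0$ and each step in $\varrho_T$. A controller for $\mathcal T$ on $\mathcal S$ is a partial function $C:\mathcal H_{\mathcal S}\times\varrho_T\to\{1,\dots,n\}$. $C$ realizes a trace $\tau=t^0\xrightarrow{a^1}t^1\xrightarrow{a^2}\cdots$ of $\mathcal T$ if for every $j$ such that $\tau$ has a step $t^j\xrightarrow{a^{j+1}}t^{j+1}$, and every system history $h=s^0\xrightarrow{a^1,k^1}\cdots\xrightarrow{a^j,k^j}s^j$ with $k^i=C(h|_{i-1},t^{i-1}\xrightarrow{a^i}t^i)$ for all $1\le i\le j$, the value $k=C(h,t^j\xrightarrow{a^{j+1}}t^{j+1})$ is defined and $\mathrm{beh}_k(s^j)$ has an outgoing $a^{j+1}$-transition in $\mathcal B_k$. $C$ is an exact composition for $\mathcal T$ on $\mathcal S$ if it realizes all traces of $\mathcal T$. For target behaviors $\mathcal T_i=\langle T_i,\mathcal A,t_{i0},\varrho_i\rangle$ ($i=1,2$), a simulation of $\mathcal T_2$ by $\mathcal T_1$ is a relation $R\subseteq T_2\times T_1$ such that $\langle t_2,t_1\rangle\in R$ and $\langle t_2,a,t_2'\rangle\in\varrho_2$ imply some $\langle t_1,a,t_1'\rangle\in\varrho_1$ with $\langle t_2',t_1'\rangle\in R$. $\mathcal T_2\preceq\mathcal T_1$ iff some simulation contains $\langle t_{20},t_{10}\rangle$;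 $\mathcal T_2\prec\mathcal T_1$ iff $\mathcal T_2\preceq\mathcal T_1$ and not $\mathcal T_1\preceq\mathcal T_2$; $\mathcal T_1\sim\mathcal T_2$ iff both $\preceq$ hold. $\tilde{\mathcal T}$ is an approximation of $\mathcal T$ on $\mathcal S$ iff $\tilde{\mathcal T}\preceq\mathcal T$ and there is an exact composition for $\tilde{\mathcal T}$ on $\mathcal S$. $\tilde{\mathcal T}$ is an optimal approximation of $\mathcal T$ on $\mathcal S$ iff it is an approximation of $\mathcal T$ on $\mathcal S$ and there is no approximation $\tilde{\mathcal T}'$ of $\mathcal T$ on $\mathcal S$ with $\tilde{\mathcal T}\prec\tilde{\mathcal T}'$. *)

theory Defs
  imports Main "HOL-Library.Extended_Nat"
begin

record ('s, 'a) behavior =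
  states :: "'s set"
  acts   :: "'a set"
  init   :: 's
  trans  :: "('s \<times> 'a \<times> 's) set"

definition is_behavior :: "('s, 'a) behavior \<Rightarrow> bool" where
  "is_behavior B \<longleftrightarrow>
     finite (states B) \<and> init B \<in> states B \<and>
     trans B \<subseteq> states B \<times> acts B \<times> states B \<and>
     (\<forall>b\<in>states B. \<exists>a b'. (b, a, b') \<in> trans B)"

type_synonym ('b, 'a) system = "('b, 'a) behavior list"

definition is_system :: "('b, 'a) system \<Rightarrow> bool" where
  "is_system S \<longleftrightarrow> (\<forall>B\<in>set S. is_behavior B)"

definition enacted_init :: "('b, 'a) system \<Rightarrow> 'b list" where
  "enacted_init S = map init S"

definition enacted_state :: "('b, 'a) system \<Rightarrow> 'b list \<Rightarrow> bool" where
  "enacted_state S s \<longleftrightarrow> length s = length S \<and> (\<forall>i<length S. s ! i \<in> states (S ! i))"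

definition enacted_step :: "('b, 'a) system \<Rightarrow> 'b list \<Rightarrow> 'a \<Rightarrow> nat \<Rightarrow> 'b list \<Rightarrow> bool" where
  "enacted_step S s a k s' \<longleftrightarrow>
     enacted_state S s \<and> enacted_state S s' \<and> k < length S \<and>
     (s ! k, a, s' ! k) \<in> trans (S ! k) \<and>
     (\<forall>i<length S. i \<noteq> k \<longrightarrow> s' ! i = s ! i)"

text \<open>A system history s0 --a1,k1--> s1 ... is represented by the list of its steps
  [(a1,k1,s1), ..., (al,kl,sl)]; its first state is always the enacted initial state.\<close>
type_synonym ('b, 'a) history = "('a \<times> nat \<times> 'b list) list"

definition hist_last :: "('b, 'a) system \<Rightarrow> ('b, 'a) history \<Rightarrow> 'b list" where
  "hist_last S h = (if h = [] then enacted_init S else snd (snd (last h)))"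

definition is_history :: "('b, 'a) system \<Rightarrow> ('b, 'a) history \<Rightarrow> bool" where
  "is_history S h \<longleftrightarrow>
     (\<forall>i<length h. enacted_step S (hist_last S (take i h))
                      (fst (h ! i)) (fst (snd (h ! i))) (snd (snd (h ! i))))"

type_synonym ('b, 'a, 't) controller = "('b, 'a) history \<Rightarrow> ('t \<times> 'a \<times> 't) \<Rightarrow> nat option"

text \<open>A (finite or infinite) trace of T: states t 0, t 1, ..., actions a 1, a 2, ...,
  with len steps (len = \<infinity> for an infinite trace).\<close>
definition is_trace :: "('t, 'a) behavior \<Rightarrow> (nat \<Rightarrow> 't) \<Rightarrow> (nat \<Rightarrow> 'a) \<Rightarrow> enat \<Rightarrow> bool" where
  "is_trace T t a len \<longleftrightarrow>
     t 0 = init T \<and> (\<forall>j. enat j < len \<longrightarrow> (t j, a (Suc j), t (Suc j)) \<in> trans T)"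

definition realizes ::
  "('b, 'a) system \<Rightarrow> ('b, 'a, 't) controller \<Rightarrow> (nat \<Rightarrow> 't) \<Rightarrow> (nat \<Rightarrow> 'a) \<Rightarrow> enat \<Rightarrow> bool" where
  "realizes S C t a len \<longleftrightarrow>
     (\<forall>j h. enat j < len \<longrightarrow> is_history S h \<longrightarrow> length h = j \<longrightarrow>
        (\<forall>i<j. fst (h ! i) = a (Suc i) \<and>
               C (take i h) (t i, a (Suc i), t (Suc i)) = Some (fst (snd (h ! i)))) \<longrightarrow>
        (\<exists>k. C h (t j, a (Suc j), t (Suc j)) = Some k \<and> k < length S \<and>
             (\<exists>b'. (hist_last S h ! k, a (Suc j), b') \<in> trans (S ! k))))"

definition exact_composition ::
  "('b, 'a, 't) controller \<Rightarrow> ('t, 'a) behavior \<Rightarrow> ('b, 'a) system \<Rightarrow> bool" where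
  "exact_composition C T S \<longleftrightarrow>
     (\<forall>t a len. is_trace T t a len \<longrightarrow> realizes S C t a len)"

definition is_simulation :: "('t2 \<times> 't1) set \<Rightarrow> ('t2, 'a) behavior \<Rightarrow> ('t1, 'a) behavior \<Rightarrow> bool" where
  "is_simulation R T2 T1 \<longleftrightarrow>
     R \<subseteq> states T2 \<times> states T1 \<and>
     (\<forall>t2 t1 a t2'. (t2, t1) \<in> R \<longrightarrow> (t2, a, t2') \<in> trans T2 \<longrightarrow>
        (\<exists>t1'. (t1, a, t1') \<in> trans T1 \<and> (t2', t1') \<in> R))"

definition simulated_by :: "('t2, 'a) behavior \<Rightarrow> ('t1, 'a) behavior \<Rightarrow> bool" (infix "\<preceq>\<^sub>s" 50) where
  "T2 \<preceq>\<^sub>s T1 \<longleftrightarrow> (\<exists>R. is_simulation R T2 T1 \<and> (init T2, init T1) \<in> R)"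

definition strictly_simulated_by :: "('t2, 'a) behavior \<Rightarrow> ('t1, 'a) behavior \<Rightarrow> bool" (infix "\<prec>\<^sub>s" 50) where
  "T2 \<prec>\<^sub>s T1 \<longleftrightarrow> T2 \<preceq>\<^sub>s T1 \<and> \<not> T1 \<preceq>\<^sub>s T2"

definition sim_equiv :: "('t1, 'a) behavior \<Rightarrow> ('t2, 'a) behavior \<Rightarrow> bool" (infix "\<sim>\<^sub>s" 50) where
  "T1 \<sim>\<^sub>s T2 \<longleftrightarrow> T1 \<preceq>\<^sub>s T2 \<and> T2 \<preceq>\<^sub>s T1"

definition approximation :: "('t, 'a) behavior \<Rightarrow> ('b, 'a) system \<Rightarrow> ('u, 'a) behavior \<Rightarrow> bool" where
  "approximation T S Ta \<longleftrightarrow>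
     is_behavior Ta \<and> acts Ta = acts T \<and> Ta \<preceq>\<^sub>s T \<and>
     (\<exists>C :: ('b, 'a, 'u) controller. exact_composition C Ta S)"

text \<open>Competing approximations range
  over behaviors with states in nat; since behaviors have finite state sets, every
  behavior is isomorphic to one of this form.\<close>
definition optimal_approximation :: "('t, 'a) behavior \<Rightarrow> ('b, 'a) system \<Rightarrow> ('u, 'a) behavior \<Rightarrow> bool" where
  "optimal_approximation T S Ta \<longleftrightarrow>
     approximation T S Ta \<and>
     \<not> (\<exists>Ta' :: (nat, 'a) behavior. approximation T S Ta' \<and> Ta \<prec>\<^sub>s Ta')"

end

theory Submission
  imports Defs
begin

lemma sim_trans:
  assumes "A \<preceq>\<^sub>s B" "B \<preceq>\<^sub>s C" shows "A \<preceq>\<^sub>s C"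
proof -
  obtain R1 where R1: "is_simulation R1 A B" "(init A, init B) \<in> R1"
    using assms(1) unfolding simulated_by_def by blast
  obtain R2 where R2: "is_simulation R2 B C" "(init B, init C) \<in> R2"
    using assms(2) unfolding simulated_by_def by blast
  have "is_simulation (R1 O R2) A C"
    unfolding is_simulation_def
  proof (intro conjI allI impI)
    show "R1 O R2 \<subseteq> states A \<times> states C" using R1(1) R2(1) unfolding is_simulation_def by blast
    fix t2 t1 a t2' assume "(t2, t1) \<in> R1 O R2" "(t2, a, t2') \<in> trans A"
    then obtain m where m: "(t2, m) \<in> R1" "(m, t1) \<in> R2" by blast
    then obtain m' where "(m, a, m') \<in> trans B" "(t2', m') \<in> R1"
      using R1(1) \<open>(t2, a, t2') \<in> trans A\<close> unfolding is_simulation_def by blast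
    then obtain t1' where "(t1, a, t1') \<in> trans C" "(m', t1') \<in> R2"
      using R2(1) m(2) unfolding is_simulation_def by blast
    then show "\<exists>t1'. (t1, a, t1') \<in> trans C \<and> (t2', t1') \<in> R1 O R2"
      using \<open>(t2', m') \<in> R1\<close> by blast
  qed
  moreover have "(init A, init C) \<in> R1 O R2" using R1 R2 by blast
  ultimately show ?thesis unfolding simulated_by_def by blast
qed

lemma to_nat:
  fixes U :: "('u, 'a) behavior" and S :: "('b, 'a) system"
  assumes "approximation T S U"
  shows "\<exists>U' :: (nat, 'a) behavior. approximation T S U' \<and> U \<preceq>\<^sub>s U' \<and> U' \<preceq>\<^sub>s U"
proof -
  have bU: "is_behavior U" and aU: "acts U = acts T" and sU: "U \<preceq>\<^sub>s T"
    using assms unfolding approximation_def by auto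
  obtain C :: "('b, 'a, 'u) controller" where C: "exact_composition C U S"
    using assms unfolding approximation_def by blast
  have fin: "finite (states U)" using bU unfolding is_behavior_def by auto
  obtain f :: "'u \<Rightarrow> nat" where inj: "inj_on f (states U)"
    using finite_imp_inj_to_nat_seg[OF fin] by blast
  define U' :: "(nat, 'a) behavior" where "U' = \<lparr>states = f ` states U, acts = acts U,
     init = f (init U), trans = (\<lambda>(x,a,y). (f x, a, f y)) ` trans U\<rparr>"
  define g where "g = inv_into (states U) f"
  have gf: "\<And>x. x \<in> states U \<Longrightarrow> g (f x) = x" unfolding g_def using inj by simp
  have trU: "trans U \<subseteq> states U \<times> acts U \<times> states U" and iU: "init U \<in> states U"
    using bU unfolding is_behavior_def by auto
  have bU': "is_behavior U'"
    unfolding is_behavior_def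
  proof (intro conjI ballI)
    show "finite (states U')" using fin by (simp add: U'_def)
    show "init U' \<in> states U'" using iU by (simp add: U'_def)
    show "trans U' \<subseteq> states U' \<times> acts U' \<times> states U'" using trU by (auto simp: U'_def)
    fix b assume "b \<in> states U'"
    then obtain x where x: "x \<in> states U" "b = f x" by (auto simp: U'_def)
    then obtain a y where "(x, a, y) \<in> trans U" using bU unfolding is_behavior_def by blast
    then have "(b, a, f y) \<in> trans U'" using x by (force simp: U'_def)
    then show "\<exists>a b'. (b, a, b') \<in> trans U'" by blast
  qed
  have s1: "U \<preceq>\<^sub>s U'"
  proof -
    let ?R = "{(x, f x) | x. x \<in> states U}"
    have "is_simulation ?R U U'"
      unfolding is_simulation_def U'_def using trU by (auto simp: image_iff) (metis case_prod_conv)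
    then show ?thesis using iU unfolding simulated_by_def U'_def by auto
  qed
  have s2: "U' \<preceq>\<^sub>s U"
  proof -
    let ?R = "{(f x, x) | x. x \<in> states U}"
    have "is_simulation ?R U' U"
      unfolding is_simulation_def
    proof (intro conjI allI impI)
      show "?R \<subseteq> states U' \<times> states U" by (auto simp: U'_def)
      fix t2 t1 a t2' assume r: "(t2, t1) \<in> ?R" and tt: "(t2, a, t2') \<in> trans U'"
      from r have t: "t1 \<in> states U" "t2 = f t1" by auto
      from tt obtain y z where yz: "(y, a, z) \<in> trans U" "t2 = f y" "t2' = f z"
        unfolding U'_def by auto
      then have "y = t1" using trU inj t by (auto dest: inj_onD)
      then show "\<exists>t1'. (t1, a, t1') \<in> trans U \<and> (t2', t1') \<in> ?R"
        using yz trU by auto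
    qed
    then show ?thesis using iU unfolding simulated_by_def U'_def by auto
  qed
  define C' :: "('b, 'a, nat) controller" where "C' = (\<lambda>h (s,a,s'). C h (g s, a, g s'))"
  have "exact_composition C' U' S"
    unfolding exact_composition_def
  proof (intro allI impI)
    fix t a len assume tr: "is_trace U' t a len"
    have "is_trace U (g \<circ> t) a len"
      unfolding is_trace_def
    proof (intro conjI allI impI)
      show "(g \<circ> t) 0 = init U" using tr iU gf unfolding is_trace_def U'_def by auto
      fix j assume "enat j < len"
      then have "(t j, a (Suc j), t (Suc j)) \<in> trans U'" using tr unfolding is_trace_def by auto
      then obtain x y where "(x, a (Suc j), y) \<in> trans U" "t j = f x" "t (Suc j) = f y"
        unfolding U'_def by auto
      then show "((g \<circ> t) j, a (Suc j), (g \<circ> t) (Suc j)) \<in> trans U"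
        using gf trU by auto
    qed
    then have "realizes S C (g \<circ> t) a len" using C unfolding exact_composition_def by blast
    then show "realizes S C' t a len" unfolding realizes_def C'_def by simp
  qed
  then have "approximation T S U'"
    unfolding approximation_def using bU' aU sim_trans[OF s2 sU] by (auto simp: U'_def)
  then show ?thesis using s1 s2 by blast
qed

lemma union_approx:
  fixes T1 :: "('u1, 'a) behavior" and T2 :: "('u2, 'a) behavior" and S :: "('b, 'a) system"
    and T :: "('t, 'a) behavior"
  assumes bT: "is_behavior T" and a1: "approximation T S T1" and a2: "approximation T S T2"
  shows "\<exists>U :: (('u1 + 'u2) option, 'a) behavior. approximation T S U \<and> T1 \<preceq>\<^sub>s U \<and> T2 \<preceq>\<^sub>s U"
proof -
  have b1: "is_behavior T1" and ac1: "acts T1 = acts T" and s1: "T1 \<preceq>\<^sub>s T"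
    using a1 unfolding approximation_def by auto
  have b2: "is_behavior T2" and ac2: "acts T2 = acts T" and s2: "T2 \<preceq>\<^sub>s T"
    using a2 unfolding approximation_def by auto
  obtain C1 :: "('b, 'a, 'u1) controller" where C1: "exact_composition C1 T1 S"
    using a1 unfolding approximation_def by blast
  obtain C2 :: "('b, 'a, 'u2) controller" where C2: "exact_composition C2 T2 S"
    using a2 unfolding approximation_def by blast
  have tr1: "trans T1 \<subseteq> states T1 \<times> acts T1 \<times> states T1" and i1: "init T1 \<in> states T1"
    and fin1: "finite (states T1)" and out1: "\<forall>b\<in>states T1. \<exists>a b'. (b, a, b') \<in> trans T1"
    using b1 unfolding is_behavior_def by auto
  have tr2: "trans T2 \<subseteq> states T2 \<times> acts T2 \<times> states T2" and i2: "init T2 \<in> states T2"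
    and fin2: "finite (states T2)" and out2: "\<forall>b\<in>states T2. \<exists>a b'. (b, a, b') \<in> trans T2"
    using b2 unfolding is_behavior_def by auto
  have iT: "init T \<in> states T" using bT unfolding is_behavior_def by auto
  define St where "St = insert None ((Some \<circ> Inl) ` states T1 \<union> (Some \<circ> Inr) ` states T2)"
  define Tr where "Tr = {(None, a, Some (Inl y)) | a y. (init T1, a, y) \<in> trans T1}
     \<union> {(None, a, Some (Inr y)) | a y. (init T2, a, y) \<in> trans T2}
     \<union> {(Some (Inl x), a, Some (Inl y)) | x a y. (x, a, y) \<in> trans T1}
     \<union> {(Some (Inr x), a, Some (Inr y)) | x a y. (x, a, y) \<in> trans T2}"
  define U :: "(('u1 + 'u2) option, 'a) behavior" where
    "U = \<lparr>states = St, acts = acts T, init = None, trans = Tr\<rparr>"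
  have bU: "is_behavior U"
    unfolding is_behavior_def
  proof (intro conjI ballI)
    show "finite (states U)" using fin1 fin2 by (simp add: U_def St_def)
    show "init U \<in> states U" by (simp add: U_def St_def)
    show "trans U \<subseteq> states U \<times> acts U \<times> states U"
      using tr1 tr2 ac1 ac2 i1 i2 by (auto simp: U_def St_def Tr_def)
    fix b assume "b \<in> states U"
    then consider "b = None" | x where "x \<in> states T1" "b = Some (Inl x)"
      | x where "x \<in> states T2" "b = Some (Inr x)" by (auto simp: U_def St_def)
    then show "\<exists>a b'. (b, a, b') \<in> trans U"
    proof cases
      case 1
      obtain a y where "(init T1, a, y) \<in> trans T1" using out1 i1 by blast
      then show ?thesis using 1 by (auto simp: U_def Tr_def)
    next
      case (2 x)
      then show ?thesis using out1 by (fastforce simp: U_def Tr_def)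
    next
      case (3 x)
      then show ?thesis using out2 by (fastforce simp: U_def Tr_def)
    qed
  qed
  obtain R1 where R1: "is_simulation R1 T1 T" "(init T1, init T) \<in> R1"
    using s1 unfolding simulated_by_def by blast
  obtain R2 where R2: "is_simulation R2 T2 T" "(init T2, init T) \<in> R2"
    using s2 unfolding simulated_by_def by blast
  have sUT: "U \<preceq>\<^sub>s T"
  proof -
    define R :: "(('u1 + 'u2) option \<times> 't) set" where "R = insert (None, init T) ({(Some (Inl x), y) | x y. (x, y) \<in> R1}
       \<union> {(Some (Inr x), y) | x y. (x, y) \<in> R2})"
    have "is_simulation R U T"
      unfolding is_simulation_def
    proof (intro conjI allI impI)
      show "R \<subseteq> states U \<times> states T"
        using R1(1) R2(1) iT unfolding R_def U_def St_def is_simulation_def by auto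
      fix t2 t1 a t2' assume r: "(t2, t1) \<in> R" and tt: "(t2, a, t2') \<in> trans U"
      show "\<exists>t1'. (t1, a, t1') \<in> trans T \<and> (t2', t1') \<in> R"
        using r tt R1 R2 unfolding R_def U_def Tr_def is_simulation_def by fastforce
    qed
    then show ?thesis unfolding simulated_by_def R_def U_def by auto
  qed
  have sub1: "T1 \<preceq>\<^sub>s U"
  proof -
    define R :: "('u1 \<times> ('u1 + 'u2) option) set" where "R = insert (init T1, None) {(x, Some (Inl x)) | x. x \<in> states T1}"
    have "is_simulation R T1 U"
      unfolding is_simulation_def
    proof (intro conjI allI impI)
      show "R \<subseteq> states T1 \<times> states U" using i1 unfolding R_def U_def St_def by auto
      fix t2 t1 a t2' assume r: "(t2, t1) \<in> R" and tt: "(t2, a, t2') \<in> trans T1"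
      show "\<exists>t1'. (t1, a, t1') \<in> trans U \<and> (t2', t1') \<in> R"
        using r tt tr1 unfolding R_def U_def Tr_def by auto
    qed
    then show ?thesis unfolding simulated_by_def R_def U_def by auto
  qed
  have sub2: "T2 \<preceq>\<^sub>s U"
  proof -
    define R :: "('u2 \<times> ('u1 + 'u2) option) set" where "R = insert (init T2, None) {(x, Some (Inr x)) | x. x \<in> states T2}"
    have "is_simulation R T2 U"
      unfolding is_simulation_def
    proof (intro conjI allI impI)
      show "R \<subseteq> states T2 \<times> states U" using i2 unfolding R_def U_def St_def by auto
      fix t2 t1 a t2' assume r: "(t2, t1) \<in> R" and tt: "(t2, a, t2') \<in> trans T2"
      show "\<exists>t1'. (t1, a, t1') \<in> trans U \<and> (t2', t1') \<in> R"
        using r tt tr2 unfolding R_def U_def Tr_def by fastforce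
    qed
    then show ?thesis unfolding simulated_by_def R_def U_def by auto
  qed
  define dec1 :: "('u1 + 'u2) option \<Rightarrow> 'u1" where "dec1 = (\<lambda>s. case s of Some (Inl x) \<Rightarrow> x | _ \<Rightarrow> init T1)"
  define dec2 :: "('u1 + 'u2) option \<Rightarrow> 'u2" where "dec2 = (\<lambda>s. case s of Some (Inr x) \<Rightarrow> x | _ \<Rightarrow> init T2)"
  define CU :: "('b, 'a, ('u1 + 'u2) option) controller" where
    "CU = (\<lambda>h (s, a, s'). case s' of Some (Inl y) \<Rightarrow> C1 h (dec1 s, a, y)
        | Some (Inr y) \<Rightarrow> C2 h (dec2 s, a, y) | None \<Rightarrow> None)"
  have "exact_composition CU U S"
    unfolding exact_composition_def
  proof (intro allI impI)
    fix t a len assume tr: "is_trace U t a len"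
    have t0: "t 0 = None" using tr unfolding is_trace_def U_def by simp
    have step: "\<And>j. enat j < len \<Longrightarrow> (t j, a (Suc j), t (Suc j)) \<in> Tr"
      using tr unfolding is_trace_def U_def by simp
    show "realizes S CU t a len"
    proof (cases "len = 0")
      case True
      then show ?thesis unfolding realizes_def by (simp add: zero_enat_def[symmetric])
    next
      case False
      then have "enat 0 < len" by (simp add: zero_enat_def[symmetric] not_gr_zero)
      from step[OF this] t0 have
        "(\<exists>y. t (Suc 0) = Some (Inl y)) \<or> (\<exists>y. t (Suc 0) = Some (Inr y))"
        unfolding Tr_def by auto
      then show ?thesis
      proof
        assume "\<exists>y. t (Suc 0) = Some (Inl y)"
        then obtain y where h1: "t (Suc 0) = Some (Inl y)" by blast
        have inl: "\<exists>z. t (Suc j) = Some (Inl z)" if "enat j < len" for j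
          using that
        proof (induction j)
          case 0 then show ?case using h1 by blast
        next
          case (Suc j)
          then have "enat j < len" using Suc_ile_eq order_less_imp_le by auto
          then obtain z where "t (Suc j) = Some (Inl z)" using Suc by blast
          with step[OF Suc.prems] show ?case unfolding Tr_def by auto
        qed
        have eq: "CU h (t j, a (Suc j), t (Suc j)) = C1 h ((dec1 \<circ> t) j, a (Suc j), (dec1 \<circ> t) (Suc j))"
          if "enat j < len" for j h
          using inl[OF that] by (auto simp: CU_def dec1_def)
        have "is_trace T1 (dec1 \<circ> t) a len"
          unfolding is_trace_def
        proof (intro conjI allI impI)
          show "(dec1 \<circ> t) 0 = init T1" using t0 by (simp add: dec1_def)
          fix j assume j: "enat j < len"
          obtain z where z: "t (Suc j) = Some (Inl z)" using inl[OF j] by blast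
          show "((dec1 \<circ> t) j, a (Suc j), (dec1 \<circ> t) (Suc j)) \<in> trans T1"
            using step[OF j] z unfolding Tr_def dec1_def by auto
        qed
        then have r: "realizes S C1 (dec1 \<circ> t) a len" using C1 unfolding exact_composition_def by blast
        show ?thesis
          unfolding realizes_def
        proof (intro allI impI)
          fix j h
          assume j: "enat j < len" and hh: "is_history S h" "length h = j"
            and pre: "\<forall>i<j. fst (h ! i) = a (Suc i) \<and>
               CU (take i h) (t i, a (Suc i), t (Suc i)) = Some (fst (snd (h ! i)))"
          have ij: "enat i < len" if "i < j" for i
            using j that by (meson enat_ord_simps(2) order_less_trans)
          have pre1: "\<forall>i<j. fst (h ! i) = a (Suc i) \<and>
               C1 (take i h) ((dec1 \<circ> t) i, a (Suc i), (dec1 \<circ> t) (Suc i)) = Some (fst (snd (h ! i)))"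
            using pre eq ij by metis
          show "\<exists>k. CU h (t j, a (Suc j), t (Suc j)) = Some k \<and> k < length S \<and>
             (\<exists>b'. (hist_last S h ! k, a (Suc j), b') \<in> trans (S ! k))"
            using r[unfolded realizes_def, rule_format, OF j hh pre1[rule_format]] eq[OF j] by simp
        qed
      next
        assume "\<exists>y. t (Suc 0) = Some (Inr y)"
        then obtain y where h1: "t (Suc 0) = Some (Inr y)" by blast
        have inl: "\<exists>z. t (Suc j) = Some (Inr z)" if "enat j < len" for j
          using that
        proof (induction j)
          case 0 then show ?case using h1 by blast
        next
          case (Suc j)
          then have "enat j < len" using Suc_ile_eq order_less_imp_le by auto
          then obtain z where "t (Suc j) = Some (Inr z)" using Suc by blast
          with step[OF Suc.prems] show ?case unfolding Tr_def by auto
        qed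
        have eq: "CU h (t j, a (Suc j), t (Suc j)) = C2 h ((dec2 \<circ> t) j, a (Suc j), (dec2 \<circ> t) (Suc j))"
          if "enat j < len" for j h
          using inl[OF that] by (auto simp: CU_def dec2_def)
        have "is_trace T2 (dec2 \<circ> t) a len"
          unfolding is_trace_def
        proof (intro conjI allI impI)
          show "(dec2 \<circ> t) 0 = init T2" using t0 by (simp add: dec2_def)
          fix j assume j: "enat j < len"
          obtain z where z: "t (Suc j) = Some (Inr z)" using inl[OF j] by blast
          show "((dec2 \<circ> t) j, a (Suc j), (dec2 \<circ> t) (Suc j)) \<in> trans T2"
            using step[OF j] z unfolding Tr_def dec2_def by auto
        qed
        then have r: "realizes S C2 (dec2 \<circ> t) a len" using C2 unfolding exact_composition_def by blast
        show ?thesis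
          unfolding realizes_def
        proof (intro allI impI)
          fix j h
          assume j: "enat j < len" and hh: "is_history S h" "length h = j"
            and pre: "\<forall>i<j. fst (h ! i) = a (Suc i) \<and>
               CU (take i h) (t i, a (Suc i), t (Suc i)) = Some (fst (snd (h ! i)))"
          have ij: "enat i < len" if "i < j" for i
            using j that by (meson enat_ord_simps(2) order_less_trans)
          have pre1: "\<forall>i<j. fst (h ! i) = a (Suc i) \<and>
               C2 (take i h) ((dec2 \<circ> t) i, a (Suc i), (dec2 \<circ> t) (Suc i)) = Some (fst (snd (h ! i)))"
            using pre eq ij by metis
          show "\<exists>k. CU h (t j, a (Suc j), t (Suc j)) = Some k \<and> k < length S \<and>
             (\<exists>b'. (hist_last S h ! k, a (Suc j), b') \<in> trans (S ! k))"
            using r[unfolded realizes_def, rule_format, OF j hh pre1[rule_format]] eq[OF j] by simp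
        qed
      qed
    qed
  qed
  then have "approximation T S U"
    unfolding approximation_def using bU sUT by (auto simp: U_def)
  then show ?thesis using sub1 sub2 by blast
qed

theorem theorem2:
  fixes S :: "('b, 'a) system"
    and T :: "('t, 'a) behavior"
    and T1 :: "('u1, 'a) behavior"
    and T2 :: "('u2, 'a) behavior"
  assumes "is_system S"
    and "is_behavior T"
    and "optimal_approximation T S T1"
    and "optimal_approximation T S T2"
  shows "T1 \<sim>\<^sub>s T2"
proof -
  have a1: "approximation T S T1" and a2: "approximation T S T2"
    using assms(3,4) unfolding optimal_approximation_def by auto
  obtain U :: "(('u1 + 'u2) option, 'a) behavior" where
    U: "approximation T S U" "T1 \<preceq>\<^sub>s U" "T2 \<preceq>\<^sub>s U"
    using union_approx[OF assms(2) a1 a2] by blast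
  obtain U' :: "(nat, 'a) behavior" where
    U': "approximation T S U'" "U \<preceq>\<^sub>s U'" "U' \<preceq>\<^sub>s U"
    using to_nat[OF U(1)] by blast
  have l1: "T1 \<preceq>\<^sub>s U'" using sim_trans[OF U(2) U'(2)] .
  have l2: "T2 \<preceq>\<^sub>s U'" using sim_trans[OF U(3) U'(2)] .
  have "U' \<preceq>\<^sub>s T1"
    using assms(3) U'(1) l1 unfolding optimal_approximation_def strictly_simulated_by_def by blast
  moreover have "U' \<preceq>\<^sub>s T2"
    using assms(4) U'(1) l2 unfolding optimal_approximation_def strictly_simulated_by_def by blast
  ultimately show ?thesis unfolding sim_equiv_def
    using sim_trans[OF l1] sim_trans[OF l2] by blast
qed

end
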